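(* Let $w$ be a string of length $n$ and $i$ a position of $w$ with $i-\mu(i)\ge1$, $i+\mu(i)-1\le n$ and $\mu(i)>1$. Then for every integer $j$ with $i<j<i+\mu(i)$ such that $j-\mu(j)<i$ and $\mu(j)\ne\mu(i)$, we have either $\mu(j)<\frac12\mu(i)$ or $\mu(j)\ge 2\mu(i)$.
   Context: For a position $i\in\{1,\dots,n\}$ of $w$, the local period $\mu(i)$ is the least positive integer $\mu$ such that $w[j]=w[j+\mu]$ for all $j$ with $\max\{1,i-\mu\}\le j$ and $j+\mu\le\min\{n,i+\mu-1\}$. *)

theory Defs
  imports Main
begin

text \<open>Strings are lists; positions are 1-based, so w[j] is w ! (j - 1).\<close>

definition letter :: "'a list \<Rightarrow> nat \<Rightarrow> 'a" where
  "letter w j = w ! (j - 1)"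

definition local_period :: "'a list \<Rightarrow> nat \<Rightarrow> nat" where
  "local_period w i = (LEAST \<mu>::nat. 0 < \<mu> \<and>
     (\<forall>j::nat. max 1 (int i - int \<mu>) \<le> int j \<and>
               int j + int \<mu> \<le> min (int (length w)) (int i + int \<mu> - 1)
               \<longrightarrow> letter w j = letter w (j + \<mu>)))"

end

theory Submission
  imports Defs
begin

lemma chain_per:
  fixes g :: "nat \<Rightarrow> 'a"
  assumes H: "\<And>k. a \<le> k \<Longrightarrow> k + s \<le> b \<Longrightarrow> g k = g (k+s)"
  shows "a \<le> k \<Longrightarrow> k + u*s \<le> b \<Longrightarrow> g k = g (k+u*s)"
proof (induction u)
  case 0
  then show ?case by simp
next
  case (Suc u)
  have "g k = g (k + u*s)" using Suc by simp
  also have "\<dots> = g (k + u*s + s)" using H[of "k+u*s"] Suc.prems by simp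
  also have "k + u*s + s = k + Suc u * s" by simp
  finally show ?case .
qed

lemma dlemma:
  fixes g :: "nat \<Rightarrow> 'a"
  assumes "0<s" "s<P" "P \<le> c"
    and H1: "\<And>k. c - P \<le> k \<Longrightarrow> k < c \<Longrightarrow> g k = g (k+P)"
    and H2: "\<And>k. c - P \<le> k \<Longrightarrow> k + s < c \<Longrightarrow> g k = g (k+s)"
  shows "\<exists>d>0. d<P \<and> (\<forall>m. c - d \<le> m \<longrightarrow> m < c \<longrightarrow> g m = g (m+d))"
proof -
  define t where "t = (P-1) div s"
  have t1: "t \<ge> 1" using assms unfolding t_def by (simp add: div_le_mono le_div_geq)
  have st: "s*t \<le> P-1" unfolding t_def by (simp add: mult.commute)
  have st2: "P - 1 < s*t + s" unfolding t_def using assms(1)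
    by (metis add.commute div_mult_mod_eq mod_less_divisor nat_add_left_cancel_less mult.commute)
  define d where "d = P - s*t"
  have d0: "d > 0" "d < P" "d \<le> s" using st st2 t1 assms(1,2) unfolding d_def
    by (auto simp: nat_mult_le_cancel_disj)
  have "\<forall>m. c - d \<le> m \<longrightarrow> m < c \<longrightarrow> g m = g (m+d)"
  proof (intro allI impI)
    fix m assume m: "c - d \<le> m" "m < c"
    define k0 where "k0 = m + d - P"
    have k0a: "c - P \<le> k0" "k0 < c" "k0 + P = m + d" using m d0 assms(3) unfolding k0_def by auto
    have H2': "\<And>k. c - P \<le> k \<Longrightarrow> k + s \<le> c - 1 \<Longrightarrow> g k = g (k+s)"
      using H2 m by (metis Suc_pred' le_imp_less_Suc less_nat_zero_code not_gr_zero)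
    have "k0 + t*s = m" using m d0 st assms unfolding k0_def d_def by (auto simp: mult.commute)
    moreover have "g k0 = g (k0 + t*s)"
      by (rule chain_per[where a="c-P" and b="c-1" and g=g and s=s, OF H2']) (use k0a m \<open>k0 + t*s = m\<close> in auto)
    moreover have "g k0 = g (m+d)" using H1[OF k0a(1,2)] k0a(3) by simp
    ultimately show "g m = g (m+d)" by simp
  qed
  then show ?thesis using d0 by blast
qed

lemma lp_prop:
  "0 < local_period w c \<and>
     (\<forall>j::nat. max 1 (int c - int (local_period w c)) \<le> int j \<and>
               int j + int (local_period w c) \<le> min (int (length w)) (int c + int (local_period w c) - 1)
               \<longrightarrow> letter w j = letter w (j + local_period w c))"
  unfolding local_period_def
  by (rule LeastI[where k="length w + 1"]) auto

lemma lp_P: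
  assumes "k + local_period w c \<le> length w" "c - local_period w c \<le> k" "k < c" "1 \<le> k"
  shows "letter w k = letter w (k + local_period w c)"
  using lp_prop[of w c] assms by auto

lemma lp_le:
  assumes "0 < d" "d < c"
    and H: "\<And>k. c - d \<le> k \<Longrightarrow> k < c \<Longrightarrow> k + d \<le> length w \<Longrightarrow> letter w k = letter w (k+d)"
  shows "local_period w c \<le> d"
  unfolding local_period_def
proof (rule Least_le, intro conjI allI impI)
  show "0 < d" by fact
  fix j assume j: "max 1 (int c - int d) \<le> int j \<and> int j + int d \<le> min (int (length w)) (int c + int d - 1)"
  show "letter w j = letter w (j + d)" using j assms(2) by (intro H) auto
qed

theorem lemma7:
  fixes w :: "'a list" and i j :: nat
  assumes "1 \<le> i" and "i \<le> length w"
    and "int i - int (local_period w i) \<ge> 1"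
    and "int i + int (local_period w i) - 1 \<le> int (length w)"
    and "local_period w i > 1"
    and "i < j" and "j < i + local_period w i"
    and "int j - int (local_period w j) < int i"
    and "local_period w j \<noteq> local_period w i"
  shows "2 * local_period w j < local_period w i \<or> local_period w j \<ge> 2 * local_period w i"
proof (rule ccontr)
  assume neg: "\<not> ?thesis"
  define p where "p = local_period w i"
  define q where "q = local_period w j"
  define n where "n = length w"
  define g where "g = letter w"
  have q0: "q > 0" unfolding q_def using lp_prop by blast
  have a1: "p < i" "i + p \<le> n + 1" "1 < p" "i < j" "j < i + p" "j < i + q" "q \<noteq> p"
    "p \<le> 2*q" "q < 2*p"
    using assms neg unfolding p_def q_def n_def by auto
  have Pp: "\<And>k. i - p \<le> k \<Longrightarrow> k < i \<Longrightarrow> g k = g (k+p)"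
    unfolding g_def p_def using a1 by (intro lp_P) (auto simp: p_def n_def)
  have Pq: "\<And>k. j - q \<le> k \<Longrightarrow> 1 \<le> k \<Longrightarrow> k < j \<Longrightarrow> k + q \<le> n \<Longrightarrow> g k = g (k+q)"
    unfolding g_def q_def n_def by (intro lp_P) auto
  have mini: "\<And>d. 0 < d \<Longrightarrow> d < i \<Longrightarrow> (\<And>k. i - d \<le> k \<Longrightarrow> k < i \<Longrightarrow> k + d \<le> n \<Longrightarrow> g k = g (k+d)) \<Longrightarrow> p \<le> d"
    unfolding p_def g_def n_def by (rule lp_le)
  have minj: "\<And>d. 0 < d \<Longrightarrow> d < j \<Longrightarrow> (\<And>k. j - d \<le> k \<Longrightarrow> k < j \<Longrightarrow> k + d \<le> n \<Longrightarrow> g k = g (k+d)) \<Longrightarrow> q \<le> d"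
    unfolding q_def g_def n_def by (rule lp_le)
  show False
  proof (cases "q < p")
    case True
    define r where "r = p - q"
    show False
    proof (cases "j + q \<le> i + p")
      case A1: True
      have Pr: "\<And>k. j - q \<le> k \<Longrightarrow> k + r < j \<Longrightarrow> g k = g (k+r)"
      proof -
        fix k assume k: "j - q \<le> k" "k + r < j"
        have "g (k+r) = g (k+r+q)" using k a1 True A1 by (intro Pq) (auto simp: r_def)
        moreover have "g k = g (k+p)" using k a1 True A1 by (intro Pp) (auto simp: r_def)
        moreover have "k + r + q = k + p" using True by (simp add: r_def)
        ultimately show "g k = g (k+r)" by simp
      qed
      show False
      proof (cases "r < q")
        case True
        have "\<exists>d>0. d<q \<and> (\<forall>m. j - d \<le> m \<longrightarrow> m < j \<longrightarrow> g m = g (m+d))"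
        proof (rule dlemma)
          show "0 < r" using \<open>q < p\<close> by (simp add: r_def)
          show "r < q" by fact
          show "q \<le> j" using a1 \<open>q < p\<close> by auto
          show "\<And>k. j - q \<le> k \<Longrightarrow> k < j \<Longrightarrow> g k = g (k+q)"
            using a1 A1 \<open>q < p\<close> by (intro Pq) auto
          show "\<And>k. j - q \<le> k \<Longrightarrow> k + r < j \<Longrightarrow> g k = g (k+r)" by (rule Pr)
        qed
        then obtain d where d: "0 < d" "d < q" "\<And>m. j - d \<le> m \<Longrightarrow> m < j \<Longrightarrow> g m = g (m+d)" by blast
        have "q \<le> d" using d a1 \<open>q < p\<close> by (intro minj) auto
        then show False using d by simp
      next
        case False
        then have pq: "p = 2*q" using a1 True by (simp add: r_def)
        have "p \<le> q"
        proof (rule mini)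
          show "0 < q" by fact
          show "q < i" using a1 True by simp
          fix k assume k: "i - q \<le> k" "k < i" "k + q \<le> n"
          show "g k = g (k+q)"
          proof (cases "j - q \<le> k")
            case True
            then show ?thesis using k a1 pq by (intro Pq) auto
          next
            case False
            have "g k = g (k+p)" using k a1 pq by (intro Pp) auto
            moreover have "g (k+q) = g (k+q+q)" using k a1 pq False by (intro Pq) auto
            ultimately show ?thesis using pq by (simp add: mult_2 add.assoc)
          qed
        qed
        then show False using True by simp
      qed
    next
      case A2: False
      have "p \<le> r"
      proof (rule mini)
        show "0 < r" using True by (simp add: r_def)
        show "r < i" using a1 by (simp add: r_def)
        fix m assume m: "i - r \<le> m" "m < i" "m + r \<le> n"
        have "g (m+r) = g (m+r+q)" using m a1 A2 True by (intro Pq) (auto simp: r_def)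
        moreover have "g m = g (m+p)" using m a1 by (intro Pp) (auto simp: r_def)
        moreover have "m + r + q = m + p" using True by (simp add: r_def)
        ultimately show "g m = g (m+r)" by simp
      qed
      then show False using True a1 by (simp add: r_def)
    qed
  next
    case False
    then have qp: "p < q" using a1 by simp
    define s where "s = q - p"
    show False
    proof (cases "j < i + s")
      case True
      have "\<exists>d>0. d<p \<and> (\<forall>m. i - d \<le> m \<longrightarrow> m < i \<longrightarrow> g m = g (m+d))"
      proof (rule dlemma)
        show "0 < s" using qp by (simp add: s_def)
        show "s < p" using a1 by (simp add: s_def)
        show "p \<le> i" using a1 by simp
        show "\<And>k. i - p \<le> k \<Longrightarrow> k < i \<Longrightarrow> g k = g (k+p)" by (rule Pp)
        fix k assume k: "i - p \<le> k" "k + s < i"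
        have "g (k+s) = g (k+s+p)" using k by (intro Pp) auto
        moreover have "g k = g (k+q)" using k a1 True qp by (intro Pq) (auto simp: s_def)
        moreover have "k + s + p = k + q" using qp by (simp add: s_def)
        ultimately show "g k = g (k+s)" by simp
      qed
      then obtain d where d: "0 < d" "d < p" "\<And>m. i - d \<le> m \<Longrightarrow> m < i \<Longrightarrow> g m = g (m+d)" by blast
      have "p \<le> d" using d a1 by (intro mini) auto
      then show False using d by simp
    next
      case False
      have "q \<le> s"
      proof (rule minj)
        show "0 < s" using qp by (simp add: s_def)
        show "s < j" using False a1 by (simp add: s_def)
        fix m assume m: "j - s \<le> m" "m < j" "m + s \<le> n"
        have "g (m-p) = g (m-p+p)" using m a1 False by (intro Pp) auto
        moreover have "g (m-p) = g (m-p+q)" using m a1 False qp by (intro Pq) (auto simp: s_def)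
        moreover have "m - p + p = m" "m - p + q = m + s" using m a1 False qp by (auto simp: s_def)
        ultimately show "g m = g (m+s)" by simp
      qed
      then show False using qp a1 by (simp add: s_def)
    qed
  qed
qed

end
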